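(* Let $\alpha\in(0,1/2)$ be irrational and let $q_k$ ($k\ge0$) be a denominator of a convergent of $\alpha$. Then there exists a factor of slope $\alpha$ whose minimum abelian period equals $q_k$.
   Context: Write $\alpha=[0;a_1,a_2,\ldots]$ with positive integers $a_i$ (so $a_1\ge2$); $q_{-1}=0$, $q_0=1$, $q_1=a_1$, $q_k=a_kq_{k-1}+q_{k-2}$ for $k\ge2$. Sturmian words: identify the circle $\mathbb{T}$ with $[0,1)$, let $R(\rho)=\{\rho+\alpha\}$, and fix one of the conventions $I_0=[0,1-\alpha)$, $I_1=[1-\alpha,1)$ or $I_0=(0,1-\alpha]$, $I_1=(1-\alpha,1]$. The Sturmian word $\mathbf{s}_{\rho,\alpha}$ has $n$-th letter $0$ if $R^n(\rho)\in I_0$ and $1$ otherwise. All these words have the same set $\mathcal{L}_\alpha$ of finite factors, the factors of slope $\alpha$. Abelian periods: the Parikh vector of a binary word $u$ is $(|u|_0,|u|_1)$; $P$ is contained in $Q$ if $P\le Q$ componentwise and $P\ne Q$. An abelian decomposition of $w$ is $w=u_0u_1\cdots u_{n-1}u_n$, $n\ge2$, with $u_1,\dots,u_{n-1}$ having a common Parikh vector $P$ and the Parikh vectors of $u_0,u_n$ contained in $P$; the common length of $u_1,\ldots,u_{n-1}$ is an abelian period; the minimum abelian period is the least one. *)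

theory Defs
  imports Complex_Main
begin

(* Continued fraction of alpha in (0,1): alpha = [0; a_1, a_2, ...].
   cf_rem alpha 0 = alpha, cf_rem alpha (k+1) = frac (1 / cf_rem alpha k) (Gauss map);
   a_k = floor (1 / cf_rem alpha (k-1)) for k >= 1. *)
fun cf_rem :: "real \<Rightarrow> nat \<Rightarrow> real" where
  "cf_rem \<alpha> 0 = \<alpha>"
| "cf_rem \<alpha> (Suc k) = frac (1 / cf_rem \<alpha> k)"

definition cf_quot :: "real \<Rightarrow> nat \<Rightarrow> nat" where
  "cf_quot \<alpha> k = nat \<lfloor>1 / cf_rem \<alpha> (k - 1)\<rfloor>"

fun cf_den :: "real \<Rightarrow> nat \<Rightarrow> nat" where
  "cf_den \<alpha> 0 = 1"
| "cf_den \<alpha> (Suc 0) = cf_quot \<alpha> 1"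
| "cf_den \<alpha> (Suc (Suc k)) = cf_quot \<alpha> (k + 2) * cf_den \<alpha> (Suc k) + cf_den \<alpha> k"

(* Sturmian word s_{rho,alpha} with convention I_0 = [0, 1-alpha), I_1 = [1-alpha, 1) *)
definition sturmian :: "real \<Rightarrow> real \<Rightarrow> nat \<Rightarrow> nat" where
  "sturmian \<alpha> \<rho> n = (if frac (\<rho> + real n * \<alpha>) < 1 - \<alpha> then 0 else 1)"

definition factors_of_slope :: "real \<Rightarrow> nat list set" where
  "factors_of_slope \<alpha> =
     {w. \<exists>\<rho> i. w = map (sturmian \<alpha> \<rho>) [i..<i + length w]}"

definition parikh :: "nat list \<Rightarrow> nat \<times> nat" where
  "parikh u = (count_list u 0, count_list u 1)"

definition parikh_contained :: "nat \<times> nat \<Rightarrow> nat \<times> nat \<Rightarrow> bool" where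
  "parikh_contained P Q \<longleftrightarrow> fst P \<le> fst Q \<and> snd P \<le> snd Q \<and> P \<noteq> Q"

definition abelian_period :: "nat list \<Rightarrow> nat \<Rightarrow> bool" where
  "abelian_period w p \<longleftrightarrow>
     (\<exists>us P. length us \<ge> 3 \<and> concat us = w \<and>
        (\<forall>i. 0 < i \<and> i < length us - 1 \<longrightarrow> parikh (us ! i) = P \<and> length (us ! i) = p) \<and>
        parikh_contained (parikh (us ! 0)) P \<and>
        parikh_contained (parikh (us ! (length us - 1))) P)"

definition min_abelian_period :: "nat list \<Rightarrow> nat \<Rightarrow> bool" where
  "min_abelian_period w p \<longleftrightarrow> abelian_period w p \<and> (\<forall>p'. abelian_period w p' \<longrightarrow> p \<le> p')"

end

theory Submission
  imports Defs
begin

fun cf_num :: "real \<Rightarrow> nat \<Rightarrow> nat" where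
  "cf_num \<alpha> 0 = 0"
| "cf_num \<alpha> (Suc 0) = 1"
| "cf_num \<alpha> (Suc (Suc k)) = cf_quot \<alpha> (k + 2) * cf_num \<alpha> (Suc k) + cf_num \<alpha> k"

context
  fixes \<alpha> :: real
  assumes a0: "0 < \<alpha>" and a1: "\<alpha> < 1" and airr: "\<alpha> \<notin> \<rat>"
begin

lemma al_props: "0 < cf_rem \<alpha> j \<and> cf_rem \<alpha> j < 1 \<and> cf_rem \<alpha> j \<notin> \<rat>"
proof (induction j)
  case 0
  then show ?case using a0 a1 airr by simp
next
  case (Suc j)
  define x where "x = cf_rem \<alpha> j"
  have x: "0 < x" "x < 1" "x \<notin> \<rat>" using Suc x_def by auto
  have ix: "1 / x \<notin> \<rat>"
  proof
    assume "1 / x \<in> \<rat>"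
    then have "1 / (1 / x) \<in> \<rat>" by (rule Rats_divide[OF Rats_1])
    then show False using x by simp
  qed
  have fr: "frac (1 / x) \<notin> \<rat>"
  proof
    assume "frac (1 / x) \<in> \<rat>"
    then have "frac (1 / x) + of_int \<lfloor>1 / x\<rfloor> \<in> \<rat>" by (simp add: Rats_add)
    then show False using ix by (simp add: frac_def)
  qed
  have "frac (1 / x) \<noteq> 0"
  proof
    assume "frac (1 / x) = 0"
    then have "frac (1 / x) \<in> \<rat>" by (simp only: Rats_0)
    then show False using fr by blast
  qed
  then have "0 < frac (1 / x)" using frac_ge_0[of "1/x"] by linarith
  moreover have "cf_rem \<alpha> (Suc j) = frac (1 / x)" by (simp add: x_def cf_rem.simps)
  ultimately show ?case using fr frac_lt_1[of "1/x"] by simp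
qed

declare cf_rem.simps(2)[simp del]

lemma key: "1 / cf_rem \<alpha> j = real (cf_quot \<alpha> (Suc j)) + cf_rem \<alpha> (Suc j)"
proof -
  define x where "x = cf_rem \<alpha> j"
  have x: "0 < x" "x < 1" using al_props x_def by auto
  have "1 < 1 / x" using x by simp
  then have f: "1 \<le> \<lfloor>1 / x\<rfloor>" by (simp add: le_floor_iff)
  have "real (nat \<lfloor>1 / x\<rfloor>) = of_int \<lfloor>1 / x\<rfloor>" by (rule of_nat_nat) (use f in linarith)
  then show ?thesis by (simp add: cf_quot_def x_def[symmetric] frac_def cf_rem.simps)
qed

lemma quot_ge1: "1 \<le> cf_quot \<alpha> (Suc j)"
proof -
  define x where "x = cf_rem \<alpha> j"
  have x: "0 < x" "x < 1" using al_props x_def by auto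
  have "1 < 1 / x" using x by simp
  then have f: "1 \<le> \<lfloor>1 / x\<rfloor>" by (simp add: le_floor_iff)
  have "nat 1 \<le> nat \<lfloor>1 / x\<rfloor>" using f by (rule nat_mono)
  then show ?thesis by (simp add: cf_quot_def x_def[symmetric])
qed

lemma den_ge1_aux: "1 \<le> cf_den \<alpha> j \<and> 1 \<le> cf_den \<alpha> (Suc j)"
proof (induction j)
  case 0
  then show ?case using quot_ge1[of 0] by simp
next
  case (Suc j)
  then show ?case by (simp add: trans_le_add2)
qed

lemma den_ge1: "1 \<le> cf_den \<alpha> j"
  using den_ge1_aux by blast

lemma den_rec_ge: "cf_den \<alpha> (Suc (Suc j)) \<ge> cf_den \<alpha> (Suc j) + cf_den \<alpha> j"
proof -
  have "cf_quot \<alpha> (Suc (Suc j)) \<ge> 1" using quot_ge1[of "Suc j"] by simp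
  then have "cf_quot \<alpha> (Suc (Suc j)) * cf_den \<alpha> (Suc j) \<ge> cf_den \<alpha> (Suc j)"
    by (metis mult_1 mult_le_mono1)
  then show ?thesis by simp
qed

lemma den_mono: "cf_den \<alpha> j \<le> cf_den \<alpha> (Suc j)"
proof (cases j)
  case 0
  then show ?thesis using quot_ge1[of 0] by simp
next
  case (Suc i)
  have "cf_den \<alpha> (Suc (Suc i)) \<ge> cf_den \<alpha> (Suc i) + cf_den \<alpha> i" by (rule den_rec_ge)
  then show ?thesis unfolding Suc by linarith
qed

definition eps :: "nat \<Rightarrow> real" where
  "eps j = real (cf_den \<alpha> j) * \<alpha> - real (cf_num \<alpha> j)"

lemma eps_rec: "eps (Suc (Suc j)) = real (cf_quot \<alpha> (Suc (Suc j))) * eps (Suc j) + eps j"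
  by (simp add: eps_def algebra_simps)

lemma eps_step: "eps (Suc j) = - cf_rem \<alpha> (Suc j) * eps j"
proof (induction j)
  case 0
  have k: "1 / \<alpha> = real (cf_quot \<alpha> 1) + cf_rem \<alpha> 1" using key[of 0] by simp
  have "cf_rem \<alpha> 1 * \<alpha> = 1 - real (cf_quot \<alpha> 1) * \<alpha>"
    using k a0 by (simp add: field_simps)
  then show ?case by (simp add: eps_def algebra_simps)
next
  case (Suc j)
  define r where "r = cf_rem \<alpha> (Suc j)"
  have r: "0 < r" using al_props r_def by auto
  have k: "1 / r = real (cf_quot \<alpha> (Suc (Suc j))) + cf_rem \<alpha> (Suc (Suc j))"
    using key r_def by simp
  have "eps j = - eps (Suc j) / r" using Suc r r_def by (simp add: field_simps)
  also have "\<dots> = - eps (Suc j) * (1 / r)" by simp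
  finally have "eps j = - eps (Suc j) * (real (cf_quot \<alpha> (Suc (Suc j))) + cf_rem \<alpha> (Suc (Suc j)))"
    using k by simp
  then show ?case using eps_rec[of j] by (simp add: algebra_simps)
qed

definition dd :: "nat \<Rightarrow> int" where
  "dd j = int (cf_den \<alpha> j) * int (cf_num \<alpha> (Suc j)) - int (cf_den \<alpha> (Suc j)) * int (cf_num \<alpha> j)"

lemma dd_val: "dd j = (-1) ^ j"
proof (induction j)
  case 0
  then show ?case by (simp add: dd_def)
next
  case (Suc j)
  have "dd (Suc j) = - dd j"
    by (simp add: dd_def algebra_simps)
  then show ?case using Suc by simp
qed

lemma dd_sq: "dd j * dd j = 1"
  by (simp add: dd_val power_mult_distrib[symmetric] flip: power_add)

lemma eps_abs: "\<bar>eps j\<bar> = 1 / (real (cf_den \<alpha> (Suc j)) + real (cf_den \<alpha> j) * cf_rem \<alpha> (Suc j))"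
proof -
  have "real (cf_den \<alpha> (Suc j)) * eps j - real (cf_den \<alpha> j) * eps (Suc j) = real_of_int (dd j)"
    by (simp add: eps_def dd_def algebra_simps)
  then have "eps j * (real (cf_den \<alpha> (Suc j)) + real (cf_den \<alpha> j) * cf_rem \<alpha> (Suc j)) = real_of_int (dd j)"
    by (simp add: eps_step algebra_simps)
  then have e0: "\<bar>eps j * (real (cf_den \<alpha> (Suc j)) + real (cf_den \<alpha> j) * cf_rem \<alpha> (Suc j))\<bar> = 1"
    by (simp add: dd_val)
  have Yp: "0 \<le> real (cf_den \<alpha> (Suc j)) + real (cf_den \<alpha> j) * cf_rem \<alpha> (Suc j)"
    using al_props[of "Suc j"] by simp
  have e: "\<bar>eps j\<bar> * (real (cf_den \<alpha> (Suc j)) + real (cf_den \<alpha> j) * cf_rem \<alpha> (Suc j)) = 1"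
    using e0 Yp by (simp only: abs_mult abs_of_nonneg)
  have "0 < real (cf_den \<alpha> (Suc j)) + real (cf_den \<alpha> j) * cf_rem \<alpha> (Suc j)"
    using den_ge1[of "Suc j"] al_props[of "Suc j"] by (simp add: add_pos_nonneg)
  then show ?thesis using e by (simp add: field_simps)
qed

lemma eps_upper: "real (cf_den \<alpha> (Suc j)) * \<bar>eps j\<bar> < 1"
proof -
  have p: "0 < real (cf_den \<alpha> j) * cf_rem \<alpha> (Suc j)"
    using den_ge1[of j] al_props[of "Suc j"] by simp
  have q: "0 < real (cf_den \<alpha> (Suc j))" using den_ge1[of "Suc j"] by simp
  show ?thesis unfolding eps_abs using p q by (simp add: field_simps)
qed

lemma eps_lower: "1 < real (cf_den \<alpha> (Suc (Suc j))) * \<bar>eps j\<bar>"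
proof -
  have r: "cf_rem \<alpha> (Suc j) < 1" "0 < cf_rem \<alpha> (Suc j)" using al_props by auto
  have q0: "1 \<le> real (cf_den \<alpha> j)" using den_ge1[of j] by simp
  have "real (cf_den \<alpha> j) * cf_rem \<alpha> (Suc j) < real (cf_den \<alpha> j)"
    using r q0 by simp
  moreover have "real (cf_den \<alpha> (Suc (Suc j))) \<ge> real (cf_den \<alpha> (Suc j)) + real (cf_den \<alpha> j)"
    using den_rec_ge[of j] by linarith
  ultimately have lt: "real (cf_den \<alpha> (Suc j)) + real (cf_den \<alpha> j) * cf_rem \<alpha> (Suc j)
     < real (cf_den \<alpha> (Suc (Suc j)))" by linarith
  have pos: "0 < real (cf_den \<alpha> (Suc j)) + real (cf_den \<alpha> j) * cf_rem \<alpha> (Suc j)"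
    using den_ge1[of "Suc j"] r q0 by (simp add: add_pos_nonneg)
  have "1 < real (cf_den \<alpha> (Suc (Suc j))) / (real (cf_den \<alpha> (Suc j)) + real (cf_den \<alpha> j) * cf_rem \<alpha> (Suc j))"
    using lt pos by (simp add: less_divide_eq_1_pos)
  then show ?thesis unfolding eps_abs by simp
qed

lemma best_approx:
  fixes p :: nat and r :: int
  assumes "0 < p" "p < cf_den \<alpha> (Suc j)"
  shows "\<bar>eps j\<bar> \<le> \<bar>real p * \<alpha> - of_int r\<bar>"
proof -
  define Q0 where "Q0 = int (cf_den \<alpha> j)"
  define Q1 where "Q1 = int (cf_den \<alpha> (Suc j))"
  define P0 where "P0 = int (cf_num \<alpha> j)"
  define P1 where "P1 = int (cf_num \<alpha> (Suc j))"
  define d where "d = dd j"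
  have dQ: "d = Q0 * P1 - Q1 * P0" by (simp add: d_def dd_def Q0_def Q1_def P0_def P1_def)
  have dd1: "d * d = 1" using dd_sq d_def by simp
  define a where "a = d * (int p * P1 - r * Q1)"
  define b where "b = d * (r * Q0 - int p * P0)"
  have pa: "int p = a * Q0 + b * Q1"
  proof -
    have "a * Q0 + b * Q1 = int p * (d * (Q0 * P1 - Q1 * P0))" by (simp add: a_def b_def algebra_simps)
    also have "\<dots> = int p * (d * d)" by (simp only: dQ[symmetric])
    finally show ?thesis using dd1 by simp
  qed
  have ra: "r = a * P0 + b * P1"
  proof -
    have "a * P0 + b * P1 = r * (d * (Q0 * P1 - Q1 * P0))" by (simp add: a_def b_def algebra_simps)
    also have "\<dots> = r * (d * d)" by (simp only: dQ[symmetric])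
    finally show ?thesis using dd1 by simp
  qed
  have "real p * \<alpha> - of_int r = of_int a * eps j + of_int b * eps (Suc j)"
  proof -
    have "real p = of_int a * of_int Q0 + of_int b * of_int Q1" using pa by (metis of_int_add of_int_mult of_int_of_nat_eq)
    moreover have "real_of_int r = of_int a * of_int P0 + of_int b * of_int P1" using ra by simp
    ultimately show ?thesis by (simp add: eps_def Q0_def Q1_def P0_def P1_def algebra_simps)
  qed
  also have "\<dots> = eps j * (of_int a - of_int b * cf_rem \<alpha> (Suc j))" by (simp add: eps_step algebra_simps)
  finally have eq: "real p * \<alpha> - of_int r = eps j * (of_int a - of_int b * cf_rem \<alpha> (Suc j))" .
  have Q0p: "0 < Q0" using den_ge1[of j] Q0_def by simp
  have Q1p: "int p < Q1" using assms Q1_def by simp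
  have r: "0 < cf_rem \<alpha> (Suc j)" using al_props by auto
  have "1 \<le> \<bar>of_int a - of_int b * cf_rem \<alpha> (Suc j)\<bar>"
  proof (cases "b = 0")
    case True
    then have "a * Q0 = int p" using pa by simp
    then have "a \<ge> 1" using Q0p assms(1)
      by (metis int_one_le_iff_zero_less of_nat_0_less_iff zero_less_mult_pos2)
    then show ?thesis using True by simp
  next
    case False
    show ?thesis
    proof (cases "b > 0")
      case True
      have "1 * Q1 \<le> b * Q1" by (rule mult_right_mono) (use True Q1p in auto)
      then have "b * Q1 \<ge> Q1" by simp
      then have "a * Q0 < 0" using pa Q1p by linarith
      then have "a < 0" using Q0p by (simp add: mult_less_0_iff)
      moreover have "0 < of_int b * cf_rem \<alpha> (Suc j)" using True r by simp
      ultimately show ?thesis by linarith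
    next
      case False2: False
      then have "b \<le> -1" using False by simp
      have "b * Q1 \<le> (-1) * Q1" by (rule mult_right_mono) (use \<open>b \<le> -1\<close> Q1p in auto)
      then have "b * Q1 \<le> - Q1" by simp
      then have "a * Q0 > 0" using pa Q1p by linarith
      then have "a > 0" using Q0p by (simp add: zero_less_mult_iff)
      moreover have "of_int b * cf_rem \<alpha> (Suc j) < 0" using \<open>b \<le> -1\<close> r by (simp add: mult_neg_pos)
      ultimately show ?thesis by linarith
    qed
  qed
  then have "\<bar>eps j\<bar> * 1 \<le> \<bar>eps j\<bar> * \<bar>of_int a - of_int b * cf_rem \<alpha> (Suc j)\<bar>"
    by (intro mult_left_mono) auto
  then show ?thesis using eq by (simp add: abs_mult)
qed

end


lemma upt_app: "a \<le> b \<Longrightarrow> b \<le> c \<Longrightarrow> [a..<b] @ [b..<c] = [a..<c]"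
  by (metis le_add_diff_inverse upt_add_eq_append)

lemma bin_len: "set u \<subseteq> {0, 1} \<Longrightarrow> length u = count_list u 0 + count_list u (1::nat)"
  by (induction u) auto

lemma contained_of:
  assumes "set u \<subseteq> {0, 1}" "set v \<subseteq> {0, 1}" "\<And>y. count_list u y \<le> count_list v y"
    "length u < length v"
  shows "parikh_contained (parikh u) (parikh v)"
proof -
  have "parikh u \<noteq> parikh v"
    using assms bin_len[of u] bin_len[of v] unfolding parikh_def by auto
  then show ?thesis using assms(3) unfolding parikh_contained_def parikh_def by auto
qed

lemma len_concat_const: "(\<And>x. x \<in> set xs \<Longrightarrow> length x = p) \<Longrightarrow> length (concat xs) = length xs * p"
  by (induction xs) auto

lemma count_concat_const:
  "(\<And>x. x \<in> set xs \<Longrightarrow> count_list x y = c) \<Longrightarrow> count_list (concat xs) y = length xs * c"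
  by (induction xs) auto

lemma split3: assumes "2 \<le> length xs" shows
  "xs = xs ! 0 # take (length xs - 2) (drop 1 xs) @ [xs ! (length xs - 1)]"
proof (cases xs)
  case Nil
  then show ?thesis using assms by simp
next
  case (Cons x ys)
  have ys: "ys \<noteq> []" using Cons assms by auto
  have e1: "ys = take (length ys - 1) ys @ [ys ! (length ys - 1)]"
    using ys by (metis append_butlast_last_id butlast_conv_take last_conv_nth)
  have e2: "xs ! (length xs - 1) = ys ! (length ys - 1)"
    using Cons ys by (simp add: nth_Cons')
  have e3: "take (length xs - 2) (drop 1 xs) = take (length ys - 1) ys" using Cons by simp
  show ?thesis unfolding e2 e3 using Cons e1 by simp
qed

context
  fixes \<alpha> \<rho> :: real
  assumes a0: "0 < \<alpha>" and a1: "\<alpha> < 1"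
begin

abbreviation "s \<equiv> sturmian \<alpha> \<rho>"

definition FF :: "nat \<Rightarrow> int" where "FF n = \<lfloor>\<rho> + real n * \<alpha>\<rfloor>"

lemma s_bin: "s n \<in> {0, 1}"
  by (simp add: sturmian_def)

lemma set_s: "set (map s xs) \<subseteq> {0, 1}"
proof
  fix y assume "y \<in> set (map s xs)"
  then obtain n where "y = s n" by auto
  then show "y \<in> {0, 1}" using s_bin[of n] by simp
qed

lemma s_floor: "int (s n) = FF (Suc n) - FF n"
proof -
  define x where "x = \<rho> + real n * \<alpha>"
  have xs: "FF (Suc n) = \<lfloor>x + \<alpha>\<rfloor>" unfolding FF_def x_def by (simp add: algebra_simps)
  have xs0: "FF n = \<lfloor>x\<rfloor>" unfolding FF_def x_def by simp
  have fx: "x = of_int \<lfloor>x\<rfloor> + frac x" by (simp add: frac_def)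
  have f0: "0 \<le> frac x" "frac x < 1" by (auto simp: frac_lt_1)
  show ?thesis
  proof (cases "frac x < 1 - \<alpha>")
    case True
    have "\<lfloor>x + \<alpha>\<rfloor> = \<lfloor>x\<rfloor>" unfolding floor_eq_iff using True f0 a0 fx by linarith
    then show ?thesis using True by (simp add: sturmian_def xs xs0 x_def[symmetric])
  next
    case False
    have "\<lfloor>x + \<alpha>\<rfloor> = \<lfloor>x\<rfloor> + 1" unfolding floor_eq_iff using False f0 a1 fx by linarith
    then show ?thesis using False by (simp add: sturmian_def xs xs0 x_def[symmetric])
  qed
qed

lemma count_s: "int (count_list (map s [a..<a+n]) 1) = FF (a + n) - FF a"
proof (induction n)
  case 0
  then show ?case by simp
next
  case (Suc n)
  have "count_list [s (a + n)] 1 = s (a + n)" using s_bin[of "a+n"] by auto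
  then show ?case using Suc s_floor[of "a+n"] by simp
qed

lemma floor_diff_close:
  fixes y z :: real
  shows "\<bar>real_of_int (\<lfloor>y\<rfloor> - \<lfloor>z\<rfloor>) - (y - z)\<bar> < 1"
  using floor_le_iff[of y] floor_correct[of y] floor_correct[of z] by linarith

lemma neg:
  assumes "abelian_period (map s [i..<i+L]) p"
  shows "\<exists>M C. 1 \<le> M \<and> 1 \<le> p \<and> L + 2 \<le> M * p + 2 * p \<and>
           \<bar>real M * real p * \<alpha> - real M * real C\<bar> < 1"
proof -
  define w where "w = map s [i..<i+L]"
  obtain us P where len: "length us \<ge> 3" and cc: "concat us = w"
    and mid: "\<And>t. 0 < t \<and> t < length us - 1 \<Longrightarrow> parikh (us ! t) = P \<and> length (us ! t) = p"
    and c0: "parikh_contained (parikh (us ! 0)) P"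
    and cn: "parikh_contained (parikh (us ! (length us - 1))) P"
    using assms unfolding abelian_period_def w_def by blast
  define n where "n = length us"
  define mids where "mids = take (n - 2) (drop 1 us)"
  define u0 where "u0 = us ! 0"
  define un where "un = us ! (n - 1)"
  have us_eq: "us = u0 # mids @ [un]"
    using split3[of us] len unfolding mids_def u0_def un_def n_def by simp
  have lm: "length mids = n - 2" using len by (simp add: mids_def n_def)
  have mids_el: "parikh x = P \<and> length x = p" if "x \<in> set mids" for x
  proof -
    from that obtain t where t: "t < length mids" "x = mids ! t" by (auto simp: in_set_conv_nth)
    have "mids ! t = us ! (Suc t)" using t lm len unfolding mids_def n_def by simp
    moreover have "0 < Suc t \<and> Suc t < length us - 1" using t lm n_def by simp
    ultimately show ?thesis using mid t by metis
  qed
  have binw: "set w \<subseteq> {0, 1}" unfolding w_def by (rule set_s)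
  have bin_us: "set x \<subseteq> {0, 1}" if "x \<in> set us" for x
  proof -
    have "set x \<subseteq> set w" using that cc by auto
    then show ?thesis using binw by blast
  qed
  have mids_sub: "set mids \<subseteq> set us" using us_eq by auto
  define M where "M = n - 2"
  have M1: "1 \<le> M" using len by (simp add: M_def n_def)
  obtain x0 where x0: "x0 \<in> set mids" using lm M1 M_def
    by (metis One_nat_def Suc_le_eq length_greater_0_conv list.set_sel(1))
  have Px0: "P = parikh x0" "length x0 = p" using mids_el[OF x0] by auto
  have lx0: "p = fst P + snd P"
    using bin_len[of x0] bin_us[of x0] x0 mids_sub Px0 by (auto simp: parikh_def)
  have short: "length u < p" if "u \<in> set us" "parikh_contained (parikh u) P" for u
  proof -
    have b: "length u = fst (parikh u) + snd (parikh u)"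
      using bin_len[of u] bin_us[of u] that(1) by (simp add: parikh_def)
    have "fst (parikh u) \<le> fst P" "snd (parikh u) \<le> snd P" "parikh u \<noteq> P"
      using that(2) unfolding parikh_contained_def by auto
    then have "fst (parikh u) + snd (parikh u) < fst P + snd P"
      by (cases "parikh u", cases P) auto
    then show ?thesis using b lx0 by simp
  qed
  have u0in: "u0 \<in> set us" by (subst us_eq) simp
  have unin: "un \<in> set us" by (subst us_eq) simp
  have c0': "parikh_contained (parikh u0) P" using c0 unfolding u0_def .
  have cn': "parikh_contained (parikh un) P" using cn unfolding un_def n_def .
  have u0s: "length u0 < p" using short[OF u0in c0'] .
  have uns: "length un < p" using short[OF unin cn'] .
  define X where "X = concat mids"
  have wX: "w = u0 @ X @ un" using cc us_eq X_def by simp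
  have lX: "length X = M * p" using len_concat_const[of mids p] mids_el lm M_def X_def by simp
  have cX: "count_list X 1 = M * snd P"
  proof -
    have "count_list x 1 = snd P" if "x \<in> set mids" for x
      using mids_el[OF that] by (metis parikh_def snd_conv)
    then have "count_list (concat mids) 1 = length mids * snd P" by (rule count_concat_const)
    then show ?thesis using lm M_def X_def by simp
  qed
  have lw: "length w = L" by (simp add: w_def)
  have Ls: "L = length u0 + M * p + length un" using wX lw lX by simp
  define c where "c = i + length u0"
  have "X = take (M * p) (drop (length u0) w)" using wX lX by simp
  also have "\<dots> = map s (take (M * p) (drop (length u0) [i..<i+L]))"
    unfolding w_def by (simp only: drop_map take_map)
  also have "drop (length u0) [i..<i+L] = [c..<i+L]" unfolding c_def by simp
  also have "take (M * p) [c..<i+L] = [c..<c + M * p]" using Ls unfolding c_def by simp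
  finally have Xe: "X = map s [c..<c + M * p]" .
  have ci: "int (M * snd P) = FF (c + M * p) - FF c" using count_s[of c "M * p"] Xe cX by simp
  have fd: "\<bar>real_of_int (FF (c + M * p) - FF c) - ((\<rho> + real (c + M * p) * \<alpha>) - (\<rho> + real c * \<alpha>))\<bar> < 1"
    unfolding FF_def by (rule floor_diff_close)
  have eq: "real_of_int (FF (c + M * p) - FF c) = real (M * snd P)"
    by (simp only: ci[symmetric] of_int_of_nat_eq)
  have eq2: "(\<rho> + real (c + M * p) * \<alpha>) - (\<rho> + real c * \<alpha>) = real M * real p * \<alpha>"
    by (simp add: algebra_simps)
  have "\<bar>real M * real p * \<alpha> - real M * real (snd P)\<bar> < 1"
    using fd unfolding eq eq2 by (simp add: abs_minus_commute)
  moreover have "L + 2 \<le> M * p + 2 * p" using Ls u0s uns by linarith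
  moreover have "1 \<le> p" using u0s by linarith
  ultimately show ?thesis using M1 by blast
qed

lemma pos:
  assumes q1: "1 \<le> q" and N1: "1 \<le> N"
    and FFm: "\<And>m. m \<le> N + 2 \<Longrightarrow> FF (m * q) = int m * int c"
  shows "abelian_period (map s [1..<1 + ((N + 2) * q - 2)]) q"
proof -
  define B where "B m = map s [m * q..<m * q + q]" for m
  have lB: "length (B m) = q" for m by (simp add: B_def)
  have binB: "set (B m) \<subseteq> {0, 1}" for m unfolding B_def by (rule set_s)
  have cB: "count_list (B m) 1 = c" if "m < N + 2" for m
  proof -
    have "int (count_list (B m) 1) = FF (m * q + q) - FF (m * q)"
      unfolding B_def by (rule count_s)
    also have "FF (m * q + q) = FF (Suc m * q)" by (simp add: add.commute)
    also have "\<dots> = int (Suc m) * int c" using FFm[of "Suc m"] that by linarith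
    also have "FF (m * q) = int m * int c" using FFm that by simp
    finally show ?thesis by (simp add: algebra_simps)
  qed
  define P where "P = (q - c, c)"
  have PB: "parikh (B m) = P" if "m < N + 2" for m
  proof -
    have "q = count_list (B m) 0 + count_list (B m) 1" using bin_len[OF binB[of m]] lB[of m] by simp
    then show ?thesis using cB[OF that] unfolding parikh_def P_def by simp
  qed
  define u0 where "u0 = map s [1..<q]"
  define e where "e = (N + 1) * q + (q - 1)"
  define un where "un = map s [(N + 1) * q..<e]"
  define mids where "mids = map (\<lambda>m. B (Suc m)) [0..<N]"
  define us where "us = u0 # mids @ [un]"
  have B0: "B 0 = s 0 # u0" unfolding B_def u0_def using q1 by (simp add: upt_conv_Cons)
  have BN: "B (N + 1) = un @ [s e]"
  proof -
    have "(N + 1) * q + q = Suc e" unfolding e_def using q1 by simp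
    then have "[(N + 1) * q..<(N + 1) * q + q] = [(N + 1) * q..<e] @ [e]"
      using upt_Suc_append[of "(N + 1) * q" e] unfolding e_def by simp
    then show ?thesis unfolding B_def un_def by simp
  qed
  have cm: "concat (map (\<lambda>m. B (Suc m)) [0..<K]) = map s [q..<q + K * q]" for K
  proof (induction K)
    case 0
    then show ?case by simp
  next
    case (Suc K)
    have "concat (map (\<lambda>m. B (Suc m)) [0..<Suc K]) = map s [q..<q + K * q] @ B (Suc K)"
      using Suc by simp
    also have "\<dots> = map s ([q..<q + K * q] @ [q + K * q..<q + Suc K * q])"
      unfolding B_def by (simp add: algebra_simps)
    also have "[q..<q + K * q] @ [q + K * q..<q + Suc K * q] = [q..<q + Suc K * q]"
      by (rule upt_app) auto
    finally show ?case .
  qed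
  have ce: "concat us = map s [1..<1 + ((N + 2) * q - 2)]"
  proof -
    have c1: "concat us = u0 @ concat mids @ un" by (simp add: us_def)
    have c2: "concat mids = map s [q..<q + N * q]" unfolding mids_def by (rule cm)
    have c3: "un = map s [q + N * q..<e]" unfolding un_def by (simp add: add.commute)
    have d1: "[q..<q + N * q] @ [q + N * q..<e] = [q..<e]" by (rule upt_app) (auto simp: e_def)
    have d2: "[1..<q] @ [q..<e] = [1..<e]" by (rule upt_app) (use q1 in \<open>auto simp: e_def\<close>)
    have d3: "e = 1 + ((N + 2) * q - 2)"
    proof -
      have h0: "(N + 2) * q = (N + 1) * q + q" by simp
      have h1: "(N + 1) * q \<ge> 1" using q1 by simp
      show ?thesis unfolding e_def using h0 h1 q1 by linarith
    qed
    have "concat us = map s ([1..<q] @ ([q..<q + N * q] @ [q + N * q..<e]))"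
      unfolding c1 c2 c3 u0_def by simp
    also have "\<dots> = map s [1..<e]" unfolding d1 d2 ..
    finally show ?thesis unfolding d3 .
  qed
  have lus: "length us = N + 2" by (simp add: us_def mids_def)
  have midok: "parikh (us ! t) = P \<and> length (us ! t) = q" if tt: "0 < t \<and> t < length us - 1" for t
  proof -
    obtain t' where t': "t = Suc t'" "t' < N" using tt lus by (cases t) auto
    have "us ! t = B t" unfolding us_def mids_def using t' by (simp add: nth_append)
    then show ?thesis using PB[of t] lB[of t] t' by simp
  qed
  have bin_u0: "set u0 \<subseteq> {0, 1}" unfolding u0_def by (rule set_s)
  have bin_un: "set un \<subseteq> {0, 1}" unfolding un_def by (rule set_s)
  have c0: "parikh_contained (parikh (us ! 0)) P"
  proof -
    have "parikh_contained (parikh u0) (parikh (B 0))"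
      by (rule contained_of[OF bin_u0 binB]) (auto simp: B0)
    then show ?thesis using PB[of 0] by (simp add: us_def)
  qed
  have cn: "parikh_contained (parikh (us ! (length us - 1))) P"
  proof -
    have "parikh_contained (parikh un) (parikh (B (N + 1)))"
      by (rule contained_of[OF bin_un binB]) (use BN in auto)
    moreover have "us ! (length us - 1) = un" unfolding lus unfolding us_def mids_def
      by (simp add: nth_append)
    ultimately show ?thesis using PB[of "N + 1"] by simp
  qed
  have "3 \<le> length us" using lus N1 by simp
  then show ?thesis unfolding abelian_period_def using ce midok c0 cn by blast
qed

end

lemma quot1_ge2:
  fixes \<alpha> :: real
  assumes "0 < \<alpha>" "\<alpha> < 1 / 2"
  shows "2 \<le> cf_den \<alpha> 1"
proof -
  have "2 < 1 / \<alpha>" using assms by (simp add: field_simps)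
  then have f: "2 \<le> \<lfloor>1 / \<alpha>\<rfloor>" by (simp add: le_floor_iff)
  have "nat 2 \<le> nat \<lfloor>1 / \<alpha>\<rfloor>" using f by (rule nat_mono)
  then show ?thesis by (simp add: cf_quot_def)
qed

theorem proposition5p5:
  fixes \<alpha> :: real and k :: nat
  assumes "0 < \<alpha>" and "\<alpha> < 1 / 2" and "\<alpha> \<notin> \<rat>"
  shows "\<exists>w \<in> factors_of_slope \<alpha>. min_abelian_period w (cf_den \<alpha> k)"
proof -
  have a0: "0 < \<alpha>" using assms by simp
  have a1: "\<alpha> < 1" using assms by simp
  have airr: "\<alpha> \<notin> \<rat>" using assms by simp
  show ?thesis
  proof (cases k)
    case 0
    define w where "w = map (sturmian \<alpha> 0) [0..<0 + 1]"
    have lw: "length w = 1" by (simp add: w_def)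
    have fac: "w \<in> factors_of_slope \<alpha>" unfolding factors_of_slope_def
      using lw by (auto simp: w_def)
    have Pnz: "parikh w \<noteq> (0, 0)"
    proof -
      have "length w = count_list w 0 + count_list w 1"
        by (rule bin_len) (unfold w_def, rule set_s[OF a0 a1])
      then show ?thesis using lw by (auto simp: parikh_def)
    qed
    have ap: "abelian_period w 1"
    proof -
      have "parikh_contained (parikh []) (parikh w)"
        using Pnz by (auto simp: parikh_contained_def parikh_def)
      moreover have "\<forall>t. 0 < t \<and> t < length [[], w, []] - 1 \<longrightarrow>
          parikh ([[], w, []] ! t) = parikh w \<and> length ([[], w, []] ! t) = 1"
        using lw by auto
      ultimately show ?thesis unfolding abelian_period_def
        by (intro exI[of _ "[[], w, []]"] exI[of _ "parikh w"]) auto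
    qed
    have "min_abelian_period w 1"
      unfolding min_abelian_period_def
    proof (intro conjI allI impI)
      show "abelian_period w 1" by (rule ap)
      fix p' assume "abelian_period w p'"
      then show "1 \<le> p'" using neg[OF a0 a1, of 0 0 1 p'] unfolding w_def by auto
    qed
    then show ?thesis using fac 0 by auto
  next
    case (Suc j)
    define q where "q = cf_den \<alpha> (Suc j)"
    define K where "K = cf_den \<alpha> (Suc (Suc j))"
    define N where "N = K - 2"
    have q1: "1 \<le> q" unfolding q_def by (rule den_ge1[OF a0 a1 airr])
    have qK: "q \<le> K" unfolding q_def K_def by (rule den_mono[OF a0 a1 airr])
    have q2: "2 \<le> q"
    proof -
      have "cf_den \<alpha> 1 \<le> cf_den \<alpha> (Suc j)"
      proof (induction j)
        case 0
        then show ?case by simp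
      next
        case (Suc j)
        then show ?case using den_mono[OF a0 a1 airr, of "Suc j"] by linarith
      qed
      then show ?thesis using quot1_ge2[OF a0 assms(2)] q_def by linarith
    qed
    have K3: "3 \<le> K" using den_rec_ge[OF a0 a1 airr, of j] den_ge1[OF a0 a1 airr, of j] q2
      unfolding K_def q_def by linarith
    have N1: "1 \<le> N" using K3 N_def by simp
    have NK: "N + 2 = K" using K3 N_def by simp
    define e where "e = eps \<alpha> (Suc j)"
    define pk where "pk = cf_num \<alpha> (Suc j)"
    have qe: "real q * \<alpha> = real pk + e" unfolding e_def q_def pk_def by (simp add: eps_def[OF a0 a1 airr])
    have Ke: "real K * \<bar>e\<bar> < 1" unfolding K_def e_def by (rule eps_upper[OF a0 a1 airr])
    define \<rho> where "\<rho> = (if 0 \<le> e then 0 else - real K * e)"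
    have rng: "0 \<le> \<rho> + real m * e \<and> \<rho> + real m * e < 1" if "m \<le> K" for m
    proof (cases "0 \<le> e")
      case True
      have "real m * e \<le> real K * e" using that True by (simp add: mult_right_mono)
      then show ?thesis using True Ke \<rho>_def by simp
    next
      case False
      have "\<rho> + real m * e = (real K - real m) * (- e)" using False \<rho>_def by (simp add: algebra_simps)
      moreover have "0 \<le> real K - real m" using that by simp
      moreover have "(real K - real m) * (- e) \<le> real K * (- e)" using False
        by (simp add: mult_right_mono)
      moreover have "0 \<le> (real K - real m) * (- e)" using False that by (intro mult_nonneg_nonneg) auto
      moreover have "real K * \<bar>e\<bar> = real K * (- e)" using False by simp
      ultimately show ?thesis using Ke by linarith
    qed
    have FFm: "FF \<alpha> \<rho> (m * q) = int m * int pk" if "m \<le> N + 2" for m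
    proof -
      have "real (m * q) * \<alpha> = real m * (real q * \<alpha>)" by simp
      also have "\<dots> = real m * real pk + real m * e" unfolding qe by (simp add: distrib_left)
      finally have "\<rho> + real (m * q) * \<alpha> = real_of_int (int m * int pk) + (\<rho> + real m * e)"
        by simp
      then show ?thesis unfolding FF_def[OF a0 a1] floor_eq_iff using rng[of m] that NK by simp
    qed
    define L where "L = (N + 2) * q - 2"
    define w where "w = map (sturmian \<alpha> \<rho>) [1..<1 + L]"
    have ap: "abelian_period w q" unfolding w_def L_def by (rule pos[OF a0 a1 q1 N1 FFm])
    have fac: "w \<in> factors_of_slope \<alpha>" unfolding factors_of_slope_def
      by (intro CollectI exI[of _ \<rho>] exI[of _ 1]) (simp add: w_def)
    have "2 * 1 \<le> K * q" by (rule mult_le_mono) (use q1 K3 in auto)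
    then have L2: "L + 2 = K * q" unfolding L_def NK by simp
    have "min_abelian_period w q"
      unfolding min_abelian_period_def
    proof (intro conjI allI impI)
      show "abelian_period w q" by (rule ap)
      fix p' assume ap': "abelian_period w p'"
      show "q \<le> p'"
      proof (rule ccontr)
        assume "\<not> q \<le> p'"
        then have pq: "p' < q" by simp
        obtain M C where M1: "1 \<le> M" and p1: "1 \<le> p'" and hML: "L + 2 \<le> M * p' + 2 * p'"
          and cl: "\<bar>real M * real p' * \<alpha> - real M * real C\<bar> < 1"
          using neg[OF a0 a1, of \<rho> 1 L p'] ap' unfolding w_def by auto
        have MK: "K \<le> M"
        proof (rule ccontr)
          assume "\<not> K \<le> M"
          then have "M + 2 \<le> K + 1" by simp
          then have "(M + 2) * p' \<le> (K + 1) * p'" by (rule mult_le_mono1)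
          moreover have "K * (p' + 1) \<le> K * q" using pq by (intro mult_le_mono2) simp
          ultimately have "K * p' + K \<le> K * p' + p'" using hML L2 by (simp add: algebra_simps)
          then show False using pq qK by simp
        qed
        have ba: "\<bar>eps \<alpha> j\<bar> \<le> \<bar>real p' * \<alpha> - of_int (int C)\<bar>"
          by (rule best_approx[OF a0 a1 airr]) (use p1 pq q_def in auto)
        have el: "1 < real K * \<bar>eps \<alpha> j\<bar>" unfolding K_def by (rule eps_lower[OF a0 a1 airr])
        have "real K * \<bar>eps \<alpha> j\<bar> \<le> real K * \<bar>real p' * \<alpha> - real C\<bar>"
          using ba by (simp add: mult_left_mono)
        also have "\<dots> \<le> real M * \<bar>real p' * \<alpha> - real C\<bar>"
          using MK by (simp add: mult_right_mono)
        also have "\<dots> = \<bar>real M * (real p' * \<alpha> - real C)\<bar>"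
          by (simp add: abs_mult)
        also have "real M * (real p' * \<alpha> - real C) = real M * real p' * \<alpha> - real M * real C"
          by (simp add: algebra_simps)
        finally show False using el cl by linarith
      qed
    qed
    then show ?thesis using fac Suc q_def by auto
  qed
qed

end
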